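(* Let $F$ be a $4$-regular graph, let $E\subseteq E(F)$ be based in $F$, and let $C$ be an oriented Euler system of $F$. Then $\Gamma_{E,C}$ is an integral cycle basis of $F-E$.
   Context: Graphs: $G=(V,H,E,\epsilon)$ with finite sets of vertices $V$ and half-edges $H$, a partition $E$ of $H$ into unordered pairs (edges), and $\epsilon:H\to V$; loops and multiple edges allowed. $G-E'$ deletes the edges of $E'$. $E'\subseteq E(G)$ is based in $G$ if it contains exactly one edge of each connected component of $G$. A directed version orders each edge as (tail, head). A directed single transition is an ordered pair of distinct half-edges incident with a common vertex. A closed walk is a sequence $((h_1,h_2),\dots,(h_{n-1},h_n))$ of directed single transitions with $\{h_2,h_3\},\{h_4,h_5\},\dots,\{h_n,h_1\}$ edges, up to cyclic shift. $\sigma(D,W)\in\mathbb Z^{E}$ counts, at each edge, traversals by $W$ along its direction in $D$ minus traversals against it. An oriented circuit is a nonempty closed walk in which each half-edge occurs at most once (vertices may repeat). The cycle space of $D$ is the right null space over $\mathbb Q$ of its vertex-edge incidence matrix. A cycle basis of $G$ is a set $B$ of closed walks such that the $\sigma(D,W)$, $W\in B$, are pairwise distinct and form a basis of the cycle space of $D$; it is integral if every $\sigma(D,W)$, $W$ a closed walk of $G$, lies in the $\mathbb Z$-span of $\{\sigma(D,W'):W'\in B\}$ (independent of $D$). $F$ is $4$-regular if every vertex is incident with exactly $4$ half-edges. An oriented Euler system of $F$ consists of one oriented Eulerian circuit (traversing every edge exactly once) for each connected component of $F$; it visits each vertex exactly twice. For a vertex $v$, the oriented circuit induced by $C$ at $v$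 based on $E$ is the segment from $v$ back to $v$ of the oriented Eulerian circuit of the component of $v$ that does not traverse the edge of $E$ in that component, with the inherited orientation. $\Gamma_{E,C}$ is the set of all these oriented circuits, $v\in V(F)$. *)

theory Defs
  imports Complex_Main "HOL-Library.Function_Algebras"
begin

text \<open>A graph (V, H, E, eps): vertices, half-edges, edges (a partition of H into
  unordered pairs), and the incidence map eps from half-edges to vertices.\<close>
record ('v, 'h) graph =
  gV :: "'v set"
  gH :: "'h set"
  gE :: "'h set set"
  geps :: "'h \<Rightarrow> 'v"

definition wf_graph :: "('v, 'h) graph \<Rightarrow> bool" where
  "wf_graph G \<longleftrightarrow> finite (gV G) \<and> finite (gH G)
     \<and> (\<forall>e\<in>gE G. e \<subseteq> gH G \<and> card e = 2)
     \<and> (\<forall>h\<in>gH G. \<exists>!e. e \<in> gE G \<and> h \<in> e)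
     \<and> geps G ` gH G \<subseteq> gV G"

definition four_regular :: "('v, 'h) graph \<Rightarrow> bool" where
  "four_regular G \<longleftrightarrow> (\<forall>v\<in>gV G. card {h\<in>gH G. geps G h = v} = 4)"

definition adj_rel :: "('v, 'h) graph \<Rightarrow> ('v \<times> 'v) set" where
  "adj_rel G = {(v, w). \<exists>e\<in>gE G. \<exists>h\<in>e. \<exists>h'\<in>e. h \<noteq> h' \<and> geps G h = v \<and> geps G h' = w}"

definition comp_of :: "('v, 'h) graph \<Rightarrow> 'v \<Rightarrow> 'v set" where
  "comp_of G v = {w\<in>gV G. (v, w) \<in> (adj_rel G)\<^sup>*}"

definition components :: "('v, 'h) graph \<Rightarrow> 'v set set" where
  "components G = comp_of G ` gV G"

definition based :: "('v, 'h) graph \<Rightarrow> 'h set set \<Rightarrow> bool" where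
  "based G Eb \<longleftrightarrow> Eb \<subseteq> gE G \<and> (\<forall>K\<in>components G. \<exists>!e. e \<in> Eb \<and> geps G ` e \<subseteq> K)"

definition delete_edges :: "('v, 'h) graph \<Rightarrow> 'h set set \<Rightarrow> ('v, 'h) graph" where
  "delete_edges G Eb = G\<lparr>gH := gH G - \<Union>Eb, gE := gE G - Eb\<rparr>"

text \<open>A closed walk ((h1,h2),...,(h_{n-1},h_n)) is represented by the list
  [h1,...,hn]: positions (2i, 2i+1) are directed single transitions, and
  the i-th traversed edge is {L!(2i+1), L!((2i+2) mod n)}.\<close>
definition traversal :: "'h list \<Rightarrow> nat \<Rightarrow> 'h set" where
  "traversal L i = {L ! (2*i+1), L ! ((2*i+2) mod length L)}"

definition closed_walk :: "('v, 'h) graph \<Rightarrow> 'h list \<Rightarrow> bool" where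
  "closed_walk G L \<longleftrightarrow> even (length L) \<and> set L \<subseteq> gH G
     \<and> (\<forall>i < length L div 2.
          L ! (2*i) \<noteq> L ! (2*i+1) \<and> geps G (L ! (2*i)) = geps G (L ! (2*i+1))
          \<and> traversal L i \<in> gE G)"

definition oriented_circuit :: "('v, 'h) graph \<Rightarrow> 'h list \<Rightarrow> bool" where
  "oriented_circuit G L \<longleftrightarrow> closed_walk G L \<and> L \<noteq> [] \<and> distinct L"

text \<open>An orientation D is given by its set T of tail half-edges.\<close>
definition orientation :: "('v, 'h) graph \<Rightarrow> 'h set \<Rightarrow> bool" where
  "orientation G T \<longleftrightarrow> T \<subseteq> gH G \<and> (\<forall>e\<in>gE G. card (e \<inter> T) = 1)"

text \<open>sigma(D,W): traversals along the direction minus traversals against it.\<close>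
definition sigma :: "'h set \<Rightarrow> 'h list \<Rightarrow> 'h set \<Rightarrow> int" where
  "sigma T L e = (\<Sum>i < length L div 2.
      if traversal L i = e then (if L ! (2*i+1) \<in> T then 1 else -1) else 0)"

definition incidence :: "('v, 'h) graph \<Rightarrow> 'h set \<Rightarrow> 'v \<Rightarrow> 'h set \<Rightarrow> rat" where
  "incidence G T v e = of_nat (card {h\<in>e. h \<notin> T \<and> geps G h = v})
                     - of_nat (card {h\<in>e. h \<in> T \<and> geps G h = v})"

definition cycle_space :: "('v, 'h) graph \<Rightarrow> 'h set \<Rightarrow> ('h set \<Rightarrow> rat) set" where
  "cycle_space G T = {x. (\<forall>e. e \<notin> gE G \<longrightarrow> x e = 0)
                        \<and> (\<forall>v\<in>gV G. (\<Sum>e\<in>gE G. incidence G T v e * x e) = 0)}"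

definition qscale :: "rat \<Rightarrow> ('h set \<Rightarrow> rat) \<Rightarrow> ('h set \<Rightarrow> rat)" where
  "qscale c f = (\<lambda>e. c * f e)"

definition zscale :: "int \<Rightarrow> ('h set \<Rightarrow> int) \<Rightarrow> ('h set \<Rightarrow> int)" where
  "zscale c f = (\<lambda>e. c * f e)"

definition qsigma :: "'h set \<Rightarrow> 'h list \<Rightarrow> 'h set \<Rightarrow> rat" where
  "qsigma T L = (\<lambda>e. of_int (sigma T L e))"

definition cycle_basis :: "('v, 'h) graph \<Rightarrow> 'h list set \<Rightarrow> bool" where
  "cycle_basis G B \<longleftrightarrow> (\<forall>W\<in>B. closed_walk G W)
     \<and> (\<forall>T. orientation G T \<longrightarrow>
            inj_on (sigma T) B
          \<and> module.independent qscale (qsigma T ` B)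
          \<and> module.span qscale (qsigma T ` B) = cycle_space G T)"

definition integral_cycle_basis :: "('v, 'h) graph \<Rightarrow> 'h list set \<Rightarrow> bool" where
  "integral_cycle_basis G B \<longleftrightarrow> cycle_basis G B
     \<and> (\<forall>T. orientation G T \<longrightarrow>
           (\<forall>W. closed_walk G W \<longrightarrow> sigma T W \<in> module.span zscale (sigma T ` B)))"

definition euler_system :: "('v, 'h) graph \<Rightarrow> ('v set \<Rightarrow> 'h list) \<Rightarrow> bool" where
  "euler_system G C \<longleftrightarrow> (\<forall>K\<in>components G. closed_walk G (C K)
     \<and> (\<forall>e\<in>gE G. card {i. i < length (C K) div 2 \<and> traversal (C K) i = e}
                   = (if geps G ` e \<subseteq> K then 1 else 0)))"

text \<open>Segment of the closed walk L from the visit at transition i to the visit at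
  transition j, closed up by the transition (L!(2j), L!(2i+1)).\<close>
definition seg :: "'h list \<Rightarrow> nat \<Rightarrow> nat \<Rightarrow> 'h list" where
  "seg L i j = (let k = length L div 2; m = 2 * ((j + k - i) mod k);
                    xs = take m (rotate (2*i+1) L) in last xs # butlast xs)"

definition induced_circuit :: "('v, 'h) graph \<Rightarrow> 'h set set \<Rightarrow> ('v set \<Rightarrow> 'h list) \<Rightarrow> 'v \<Rightarrow> 'h list" where
  "induced_circuit G Eb C v = (let L = C (comp_of G v); k = length L div 2;
       I = {i. i < k \<and> geps G (L ! (2*i)) = v}
     in THE S. \<exists>i\<in>I. \<exists>j\<in>I. i \<noteq> j \<and> S = seg L i j \<and> (\<forall>e\<in>Eb. e \<inter> set S = {}))"

definition Gamma :: "('v, 'h) graph \<Rightarrow> 'h set set \<Rightarrow> ('v set \<Rightarrow> 'h list) \<Rightarrow> 'h list set" where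
  "Gamma G Eb C = induced_circuit G Eb C ` gV G"

end

theory Submission
  imports Defs
begin

lemma sum_fun_app: "(\<Sum>x\<in>A. f x) y = (\<Sum>x\<in>A. f x y)"
  by (induction A rule: infinite_finite_induct) auto

definition cin :: "nat \<Rightarrow> nat \<Rightarrow> nat \<Rightarrow> nat \<Rightarrow> bool" where
  "cin k i j t \<longleftrightarrow> (t + k - i) mod k < (j + k - i) mod k"

definition prd :: "nat \<Rightarrow> nat \<Rightarrow> nat" where
  "prd k t = (if t = 0 then k - 1 else t - 1)"

lemma modk_form: "(x::nat) < k \<Longrightarrow> y < k \<Longrightarrow> (x + k - y) mod k = (if y \<le> x then x - y else x + k - y)"
proof (cases "y \<le> x")
  case True
  assume "x < k" "y < k"
  then have eq: "x + k - y = (x - y) + k" using True by arith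
  have "(x + k - y) mod k = x - y" unfolding eq using \<open>x < k\<close> by simp
  then show ?thesis using True by simp
next
  case False
  assume "x < k" "y < k"
  then show ?thesis using False by simp
qed

lemma prd_lt: "t < k \<Longrightarrow> prd k t < k"
  unfolding prd_def by arith

lemma cin_i: "i < k \<Longrightarrow> j < k \<Longrightarrow> i \<noteq> j \<Longrightarrow> cin k i j i \<and> \<not> cin k i j (prd k i)"
  using prd_lt[of i k] unfolding cin_def by (simp add: modk_form) (auto simp: prd_def)

lemma cin_j: "i < k \<Longrightarrow> j < k \<Longrightarrow> i \<noteq> j \<Longrightarrow> \<not> cin k i j j \<and> cin k i j (prd k j)"
  using prd_lt[of j k] unfolding cin_def by (simp add: modk_form) (auto simp: prd_def)

lemma cin_other: "i < k \<Longrightarrow> j < k \<Longrightarrow> t < k \<Longrightarrow> t \<noteq> i \<Longrightarrow> t \<noteq> j \<Longrightarrow> cin k i j (prd k t) = cin k i j t"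
  using prd_lt[of t k] unfolding cin_def by (simp add: modk_form) (auto simp: prd_def)

lemma prd_Suc: "0 < k \<Longrightarrow> prd k ((p + Suc n) mod k) = (p + n) mod k"
proof -
  assume k: "0 < k"
  have "(p + Suc n) mod k = (if Suc ((p + n) mod k) = k then 0 else Suc ((p + n) mod k))"
    using mod_Suc by simp
  moreover have "(p + n) mod k < k" using k by simp
  ultimately show ?thesis unfolding prd_def by auto
qed

lemma diff_ind:
  fixes c :: "'w \<Rightarrow> 'a::comm_ring_1"
  assumes fin: "finite W" and ab: "\<forall>w\<in>W. a w < k \<and> b w < k \<and> a w \<noteq> b w"
    and t: "t < k" and w0: "w0 \<in> W" "t = a w0 \<or> t = b w0"
    and oth: "\<forall>w\<in>W. w \<noteq> w0 \<longrightarrow> t \<noteq> a w \<and> t \<noteq> b w"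
  shows "(\<Sum>w\<in>W. if cin k (a w) (b w) (prd k t) then c w else 0)
       - (\<Sum>w\<in>W. if cin k (a w) (b w) t then c w else 0) = (if t = b w0 then c w0 else - c w0)"
proof -
  let ?f = "\<lambda>w. (if cin k (a w) (b w) (prd k t) then c w else 0) - (if cin k (a w) (b w) t then c w else 0)"
  have "(\<Sum>w\<in>W. if cin k (a w) (b w) (prd k t) then c w else 0)
       - (\<Sum>w\<in>W. if cin k (a w) (b w) t then c w else 0) = (\<Sum>w\<in>W. ?f w)"
    by (simp add: sum_subtractf)
  also have "\<dots> = ?f w0 + (\<Sum>w\<in>W - {w0}. ?f w)"
    using fin w0 by (simp add: sum.remove)
  also have "(\<Sum>w\<in>W - {w0}. ?f w) = 0"
  proof (rule sum.neutral, rule ballI)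
    fix w assume "w \<in> W - {w0}"
    then show "?f w = 0" using cin_other[of "a w" k "b w" t] ab oth t by auto
  qed
  also have "?f w0 = (if t = b w0 then c w0 else - c w0)"
    using cin_i[of "a w0" k "b w0"] cin_j[of "a w0" k "b w0"] ab w0 by auto
  finally show ?thesis by simp
qed

lemma A1:
  fixes y :: "nat \<Rightarrow> 'a::comm_ring_1" and a b :: "'w \<Rightarrow> nat"
  assumes fin: "finite W" and p: "p < k" and yp: "y p = 0"
    and ab: "\<forall>w\<in>W. a w < k \<and> b w < k \<and> a w \<noteq> b w \<and> \<not> cin k (a w) (b w) p"
    and uq: "\<forall>t<k. \<exists>!w. w \<in> W \<and> (t = a w \<or> t = b w)"
    and veq: "\<forall>w\<in>W. (y (prd k (a w)) - y (a w)) + (y (prd k (b w)) - y (b w)) = 0"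
    and t: "t < k"
  shows "y t = (\<Sum>w\<in>W. if cin k (a w) (b w) t then y (prd k (b w)) - y (b w) else 0)"
proof -
  define D where "D w = y (prd k (b w)) - y (b w)" for w
  define S where "S t = (\<Sum>w\<in>W. if cin k (a w) (b w) t then D w else 0)" for t
  define z where "z t = y t - S t" for t
  have ab': "\<forall>w\<in>W. a w < k \<and> b w < k \<and> a w \<noteq> b w" using ab by auto
  have step: "z (prd k t) = z t" if tk: "t < k" for t
  proof -
    obtain w0 where w0: "w0 \<in> W" "t = a w0 \<or> t = b w0"
      and u: "\<And>w. w \<in> W \<Longrightarrow> t = a w \<or> t = b w \<Longrightarrow> w = w0"
      using uq tk by metis
    have oth: "\<forall>w\<in>W. w \<noteq> w0 \<longrightarrow> t \<noteq> a w \<and> t \<noteq> b w" using u by blast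
    have "S (prd k t) - S t = (if t = b w0 then D w0 else - D w0)"
      unfolding S_def by (rule diff_ind[OF fin ab' tk w0 oth])
    also have "\<dots> = y (prd k t) - y t"
    proof (cases "t = b w0")
      case True then show ?thesis by (simp add: D_def)
    next
      case False
      then have "t = a w0" using w0 by auto
      then show ?thesis using veq w0 False unfolding D_def
        by (simp add: algebra_simps eq_neg_iff_add_eq_0)
    qed
    finally show ?thesis unfolding z_def by (simp add: algebra_simps)
  qed
  have zp: "z p = 0"
    unfolding z_def S_def using yp ab by simp
  have kpos: "0 < k" using p by simp
  have zn: "z ((p + n) mod k) = 0" for n
  proof (induction n)
    case 0 then show ?case using zp p by simp
  next
    case (Suc n)
    have "z ((p + Suc n) mod k) = z (prd k ((p + Suc n) mod k))"
      using step[of "(p + Suc n) mod k"] kpos by simp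
    also have "\<dots> = z ((p + n) mod k)" using prd_Suc[OF kpos] by simp
    finally show ?case using Suc by simp
  qed
  have "t = (p + (t + k - p)) mod k" using t p by simp
  then have "z t = 0" using zn[of "t + k - p"] by simp
  then show ?thesis unfolding z_def S_def D_def by simp
qed

lemma A2:
  fixes c :: "'w \<Rightarrow> 'a::comm_ring_1" and a b :: "'w \<Rightarrow> nat"
  assumes fin: "finite W"
    and ab: "\<forall>w\<in>W. a w < k \<and> b w < k \<and> a w \<noteq> b w"
    and uq: "\<forall>t<k. \<exists>!w. w \<in> W \<and> (t = a w \<or> t = b w)"
    and z: "\<forall>t<k. (\<Sum>w\<in>W. if cin k (a w) (b w) t then c w else 0) = 0"
    and w0: "w0 \<in> W"
  shows "c w0 = 0"
proof -
  let ?t = "b w0"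
  have tk: "?t < k" using ab w0 by auto
  have w0': "?t = a w0 \<or> ?t = b w0" by simp
  have oth: "\<forall>w\<in>W. w \<noteq> w0 \<longrightarrow> ?t \<noteq> a w \<and> ?t \<noteq> b w"
    using uq tk w0 by blast
  have "(\<Sum>w\<in>W. if cin k (a w) (b w) (prd k ?t) then c w else 0)
       - (\<Sum>w\<in>W. if cin k (a w) (b w) ?t then c w else 0) = c w0"
    using diff_ind[OF fin ab tk w0 w0' oth] by simp
  then show ?thesis using z tk prd_lt[OF tk] by simp
qed

lemma cin_swap: "a < k \<Longrightarrow> b < k \<Longrightarrow> p < k \<Longrightarrow> a \<noteq> b \<Longrightarrow> cin k a b p \<longleftrightarrow> \<not> cin k b a p"
  unfolding cin_def by (simp add: modk_form) (auto)

lemma modlt: "r < x mod k \<Longrightarrow> i < k \<Longrightarrow> r < (k::nat)"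
proof -
  assume "r < x mod k" "i < k"
  then have "x mod k < k" by simp
  then show ?thesis using \<open>r < x mod k\<close> by simp
qed

lemma rot_inv: "(i::nat) < k \<Longrightarrow> r < k \<Longrightarrow> (((i + r) mod k) + k - i) mod k = r"
proof -
  assume i: "i < k" and r: "r < k"
  have x: "(i + r) mod k < k" using i by simp
  show ?thesis
  proof (cases "i + r < k")
    case True then show ?thesis using modk_form[OF x i] by simp
  next
    case False
    then have e: "(i + r) mod k = i + r - k" using i r by (simp add: mod_if)
    then show ?thesis using modk_form[OF x i] False i r by auto
  qed
qed

lemma rot_image:
  assumes i: "(i::nat) < k" and j: "j < k"
  shows "(\<lambda>r. (i + r) mod k) ` {..<(j + k - i) mod k} = {t. t < k \<and> cin k i j t}"
proof
  show "(\<lambda>r. (i + r) mod k) ` {..<(j + k - i) mod k} \<subseteq> {t. t < k \<and> cin k i j t}"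
  proof
    fix t assume "t \<in> (\<lambda>r. (i + r) mod k) ` {..<(j + k - i) mod k}"
    then obtain r where r: "r < (j + k - i) mod k" "t = (i + r) mod k" by auto
    have rk: "r < k" using modlt[OF r(1) i] .
    have "t < k" using r i by simp
    moreover have "cin k i j t" unfolding cin_def r(2) rot_inv[OF i rk] using r(1) .
    ultimately show "t \<in> {t. t < k \<and> cin k i j t}" by simp
  qed
next
  show "{t. t < k \<and> cin k i j t} \<subseteq> (\<lambda>r. (i + r) mod k) ` {..<(j + k - i) mod k}"
  proof
    fix t assume t: "t \<in> {t. t < k \<and> cin k i j t}"
    let ?r = "(t + k - i) mod k"
    have "?r < (j + k - i) mod k" using t unfolding cin_def by simp
    moreover have "(i + ?r) mod k = t"
    proof -
      have "t < k" using t by simp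
      then show ?thesis using i by (simp add: modk_form)
    qed
    ultimately show "t \<in> (\<lambda>r. (i + r) mod k) ` {..<(j + k - i) mod k}" by (metis image_eqI lessThan_iff)
  qed
qed

lemma rot_inj:
  assumes i: "(i::nat) < k" and j: "j < k"
  shows "inj_on (\<lambda>r. (i + r) mod k) {..<(j + k - i) mod k}"
proof
  fix r s assume r: "r \<in> {..<(j + k - i) mod k}" and s: "s \<in> {..<(j + k - i) mod k}"
    and eq: "(i + r) mod k = (i + s) mod k"
  have "r < k" "s < k" using modlt[of r "j + k - i" k i] modlt[of s "j + k - i" k i] r s i by auto
  then show "r = s" using rot_inv[OF i, of r] rot_inv[OF i, of s] eq by metis
qed

lemma rot_sum:
  fixes g :: "nat \<Rightarrow> 'a::comm_monoid_add"
  assumes i: "i < k" and j: "j < k"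
  shows "(\<Sum>r<(j + k - i) mod k. g ((i + r) mod k)) = (\<Sum>t<k. if cin k i j t then g t else 0)"
proof -
  have "(\<Sum>r<(j + k - i) mod k. g ((i + r) mod k)) = (\<Sum>t\<in>{t. t < k \<and> cin k i j t}. g t)"
    using sum.reindex[OF rot_inj[OF i j], of g] rot_image[OF i j] by (simp add: comp_def)
  also have "\<dots> = (\<Sum>t<k. if cin k i j t then g t else 0)"
    by (rule sum.mono_neutral_cong_left) auto
  finally show ?thesis .
qed

lemma rot_Union:
  assumes i: "i < k" and j: "j < k"
  shows "(\<Union>r<(j + k - i) mod k. f ((i + r) mod k)) = (\<Union>t\<in>{t. t < k \<and> cin k i j t}. f t)"
proof -
  have "(\<Union>r<(j + k - i) mod k. f ((i + r) mod k)) = (\<Union>t\<in>(\<lambda>r. (i + r) mod k) ` {..<(j + k - i) mod k}. f t)"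
    by auto
  then show ?thesis using rot_image[OF i j] by simp
qed

lemma mod2_odd: "(0::nat) < k \<Longrightarrow> (2 * x + 1) mod (2 * k) = 2 * (x mod k) + 1"
proof -
  have "(2 * x + 1) mod (2 * k) = 2 * ((2 * x + 1) div 2 mod k) + (2 * x + 1) mod 2"
    by (rule mod_mult2_eq)
  then show ?thesis by simp
qed

lemma mod2_even: "(2 * x) mod (2 * k) = 2 * (x mod (k::nat))"
  by (rule mod_mult_mult1)

lemma set_traversals:
  assumes ev: "even (length S)"
  shows "set S = (\<Union>r<length S div 2. traversal S r)"
proof
  show "(\<Union>r<length S div 2. traversal S r) \<subseteq> set S"
  proof
    fix x assume "x \<in> (\<Union>r<length S div 2. traversal S r)"
    then obtain r where r: "r < length S div 2" "x \<in> traversal S r" by auto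
    have a: "2 * r + 1 < length S" using r(1) ev by auto
    have "0 < length S" using r(1) by auto
    then have b: "(2 * r + 2) mod length S < length S" by simp
    have "x = S ! (2 * r + 1) \<or> x = S ! ((2 * r + 2) mod length S)"
      using r(2) unfolding traversal_def by simp
    then show "x \<in> set S" using a b nth_mem by metis
  qed
next
  show "set S \<subseteq> (\<Union>r<length S div 2. traversal S r)"
  proof
    fix x assume "x \<in> set S"
    then obtain q where q: "q < length S" "x = S ! q" by (auto simp: in_set_conv_nth)
    obtain nh where nh: "length S = 2 * nh" using ev by blast
    have rr: "\<exists>r<nh. x \<in> traversal S r"
    proof (cases "odd q")
      case True
      then obtain r where r: "q = 2 * r + 1" by (metis oddE)
      then have "r < nh" using q nh by simp
      moreover have "x \<in> traversal S r" unfolding traversal_def using q r by simp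
      ultimately show ?thesis by blast
    next
      case False
      then obtain r where r: "q = 2 * r" by blast
      show ?thesis
      proof (cases r)
        case 0
        have np: "nh > 0" using q nh by simp
        have "2 * (nh - 1) + 2 = length S" using nh np by simp
        then have "(2 * (nh - 1) + 2) mod length S = 0" by simp
        then have "x \<in> traversal S (nh - 1)" unfolding traversal_def using q r 0 by simp
        moreover have "nh - 1 < nh" using np by simp
        ultimately show ?thesis by blast
      next
        case (Suc r')
        have "r' < nh" using q r Suc nh by simp
        moreover have "(2 * r' + 2) mod length S = q" using q r Suc by simp
        then have "x \<in> traversal S r'" unfolding traversal_def using q by simp
        ultimately show ?thesis by blast
      qed
    qed
    then show "x \<in> (\<Union>r<length S div 2. traversal S r)" using nh by auto
  qed
qed

locale segctx =
  fixes L :: "'h list" and k i j :: nat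
  assumes lenL: "length L = 2 * k" and i: "i < k" and j: "j < k" and ij: "i \<noteq> j"
begin

definition A where "A = (j + k - i) mod k"

lemma kpos: "0 < k" using i by simp

lemma A_pos: "0 < A" and A_lt: "A < k"
  using i j ij unfolding A_def by (auto simp: modk_form)

lemma iA: "(i + A) mod k = j"
  using i j unfolding A_def by (auto simp: modk_form mod_if)

lemma seg_unfold: "seg L i j = (let xs = take (2 * A) (rotate (2*i+1) L) in last xs # butlast xs)"
  unfolding seg_def A_def using lenL by simp

lemma len_take: "length (take (2 * A) (rotate (2*i+1) L)) = 2 * A"
  using A_lt lenL by simp

lemma seg_length: "length (seg L i j) = 2 * A"
  unfolding seg_unfold Let_def using len_take A_pos by simp

lemma seg_nth: "n < 2 * A \<Longrightarrow> seg L i j ! n = L ! ((2 * i + (if n = 0 then 2 * A else n)) mod (2 * k))"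
proof -
  assume n: "n < 2 * A"
  let ?xs = "take (2 * A) (rotate (2*i+1) L)"
  have xsn: "?xs ! q = L ! ((2 * i + 1 + q) mod (2 * k))" if "q < 2 * A" for q
  proof -
    have "?xs ! q = rotate (2*i+1) L ! q" using that by (rule nth_take)
    also have "\<dots> = L ! ((2 * i + 1 + q) mod length L)"
      by (rule nth_rotate) (use that A_lt lenL in simp)
    finally show ?thesis using lenL by simp
  qed
  have ne: "?xs \<noteq> []" using len_take A_pos by auto
  show ?thesis
  proof (cases n)
    case 0
    have "seg L i j ! n = last ?xs" unfolding seg_unfold Let_def 0 by simp
    also have "\<dots> = ?xs ! (2 * A - 1)" using ne len_take by (simp add: last_conv_nth)
    also have "\<dots> = L ! ((2 * i + 1 + (2 * A - 1)) mod (2 * k))" using xsn A_pos by simp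
    finally show ?thesis using 0 A_pos by simp
  next
    case (Suc n')
    have "seg L i j ! n = butlast ?xs ! n'" unfolding seg_unfold Let_def Suc by simp
    also have "\<dots> = ?xs ! n'" using n Suc len_take by (simp add: nth_butlast)
    also have "\<dots> = L ! ((2 * i + 1 + n') mod (2 * k))" using xsn n Suc by simp
    finally show ?thesis using Suc by simp
  qed
qed

lemma seg_odd: "r < A \<Longrightarrow> seg L i j ! (2 * r + 1) = L ! (2 * ((i + r) mod k) + 1)"
proof -
  assume r: "r < A"
  have "seg L i j ! (2 * r + 1) = L ! ((2 * (i + r) + 1) mod (2 * k))"
    using seg_nth[of "2 * r + 1"] r by (simp add: algebra_simps)
  also have "\<dots> = L ! (2 * ((i + r) mod k) + 1)" by (simp only: mod2_odd[OF kpos])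
  finally show ?thesis .
qed

lemma seg_even_next: "r < A \<Longrightarrow> seg L i j ! ((2 * r + 2) mod (2 * A)) = L ! ((2 * ((i + r) mod k) + 2) mod (2 * k))"
proof -
  assume r: "r < A"
  have "(2 * ((i + r) mod k) + 2) mod (2 * k) = (2 * (i + r) + 2) mod (2 * k)"
    by (metis mod2_even mod_add_left_eq)
  moreover have "seg L i j ! ((2 * r + 2) mod (2 * A)) = L ! ((2 * (i + r) + 2) mod (2 * k))"
  proof (cases "r + 1 < A")
    case True
    then have "(2 * r + 2) mod (2 * A) = 2 * r + 2" by simp
    then show ?thesis using seg_nth[of "2 * r + 2"] True by (simp add: algebra_simps)
  next
    case False
    then have "r + 1 = A" using r by simp
    then have "2 * r + 2 = 2 * A" by simp
    then have "(2 * r + 2) mod (2 * A) = 0" by simp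
    moreover have "2 * i + 2 * A = 2 * (i + r) + 2" using \<open>r + 1 = A\<close> by simp
    ultimately show ?thesis using seg_nth[of 0] A_pos by simp
  qed
  ultimately show ?thesis by simp
qed

lemma seg_traversal: "r < A \<Longrightarrow> traversal (seg L i j) r = traversal L ((i + r) mod k)"
  unfolding traversal_def seg_length lenL using seg_odd seg_even_next by simp

lemma seg_even: "0 < r \<Longrightarrow> r < A \<Longrightarrow> seg L i j ! (2 * r) = L ! (2 * ((i + r) mod k))"
  using seg_nth[of "2 * r"] mod2_even[of "i + r" k] by (simp add: algebra_simps)

lemma seg_0: "seg L i j ! 0 = L ! (2 * j)"
proof -
  have "seg L i j ! 0 = L ! ((2 * (i + A)) mod (2 * k))"
    using seg_nth[of 0] A_pos by (simp add: algebra_simps)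
  then show ?thesis using mod2_even[of "i + A" k] iA by simp
qed

lemma seg_set: "set (seg L i j) = (\<Union>t\<in>{t. t < k \<and> cin k i j t}. traversal L t)"
proof -
  have "set (seg L i j) = (\<Union>r<A. traversal (seg L i j) r)"
    using set_traversals[of "seg L i j"] seg_length by simp
  also have "\<dots> = (\<Union>r<A. traversal L ((i + r) mod k))"
    using seg_traversal by simp
  also have "\<dots> = (\<Union>t\<in>{t. t < k \<and> cin k i j t}. traversal L t)"
    unfolding A_def by (rule rot_Union[OF i j])
  finally show ?thesis .
qed

lemma seg_sigma: "sigma T (seg L i j) e =
   (\<Sum>t<k. if cin k i j t then (if traversal L t = e then (if L ! (2 * t + 1) \<in> T then 1 else -1) else 0) else 0)"
proof -
  have "sigma T (seg L i j) e = (\<Sum>r<A. if traversal L ((i + r) mod k) = e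
        then (if L ! (2 * ((i + r) mod k) + 1) \<in> T then 1 else -1) else 0)"
    unfolding sigma_def seg_length
  proof (intro sum.cong)
    show "{..<2 * A div 2} = {..<A}" by simp
  next
    fix x assume "x \<in> {..<A}"
    then have x: "x < A" by simp
    show "(if traversal (seg L i j) x = e then if seg L i j ! (2 * x + 1) \<in> T then 1 else - 1 else 0) =
         (if traversal L ((i + x) mod k) = e then if L ! (2 * ((i + x) mod k) + 1) \<in> T then 1 else - 1 else 0)"
      by (simp only: seg_traversal[OF x] seg_odd[OF x])
  qed
  also have "\<dots> = (\<Sum>t<k. if cin k i j t then (if traversal L t = e then (if L ! (2 * t + 1) \<in> T then 1 else -1) else 0) else 0)"
    unfolding A_def by (rule rot_sum[OF i j, where g = "\<lambda>t. if traversal L t = e then (if L ! (2 * t + 1) \<in> T then 1 else -1) else 0"])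
  finally show ?thesis .
qed

end

lemma prd_next: "s < (n::nat) \<Longrightarrow> (prd n s + 1) mod n = s"
  unfolding prd_def by auto

lemma next_prd: "i < (n::nat) \<Longrightarrow> prd n ((i + 1) mod n) = i"
  unfolding prd_def by (auto simp: mod_if)

lemma shift_sum:
  fixes h :: "nat \<Rightarrow> nat \<Rightarrow> 'a::comm_monoid_add"
  shows "(\<Sum>i<n. h ((i + 1) mod n) i) = (\<Sum>s<n. h s (prd n s))"
  by (rule sum.reindex_bij_witness[where j = "\<lambda>i. (i + 1) mod n" and i = "prd n"])
     (auto simp: prd_next[simplified] next_prd[simplified] prd_lt)

locale fr =
  fixes F :: "('v, 'h) graph" and Eb :: "'h set set" and C :: "'v set \<Rightarrow> 'h list"
  assumes wf: "wf_graph F" and reg: "four_regular F" and bs: "based F Eb" and eu: "euler_system F C"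
begin

abbreviation "V \<equiv> gV F"
abbreviation "H \<equiv> gH F"
abbreviation "E \<equiv> gE F"
abbreviation "eps \<equiv> geps F"

lemma finV: "finite V" and finH: "finite H" using wf unfolding wf_graph_def by auto
lemma edge_sub: "e \<in> E \<Longrightarrow> e \<subseteq> H" using wf unfolding wf_graph_def by auto
lemma edge_card: "e \<in> E \<Longrightarrow> card e = 2" using wf unfolding wf_graph_def by auto
lemma eps_V: "h \<in> H \<Longrightarrow> eps h \<in> V" using wf unfolding wf_graph_def by auto
lemma half_edge: "h \<in> H \<Longrightarrow> \<exists>e. e \<in> E \<and> h \<in> e" using wf unfolding wf_graph_def by blast
lemma edge_disj: "e \<in> E \<Longrightarrow> e' \<in> E \<Longrightarrow> h \<in> e \<Longrightarrow> h \<in> e' \<Longrightarrow> e = e'"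
proof -
  assume a: "e \<in> E" "e' \<in> E" "h \<in> e" "h \<in> e'"
  then have "h \<in> H" using edge_sub by auto
  then have "\<exists>!e. e \<in> E \<and> h \<in> e" using wf unfolding wf_graph_def by blast
  then show ?thesis using a by blast
qed
lemma edge_ne: "e \<in> E \<Longrightarrow> \<exists>h. h \<in> e"
  using edge_card[of e] by (metis card.empty ex_in_conv zero_neq_numeral)
lemma edge_two: "e \<in> E \<Longrightarrow> \<exists>a b. a \<noteq> b \<and> e = {a, b}"
  using edge_card by (metis card_2_iff)

lemma adj_sym: "sym (adj_rel F)"
proof (rule symI)
  fix a b assume "(a, b) \<in> adj_rel F"
  then obtain e h h' where "e \<in> E" "h \<in> e" "h' \<in> e" "h \<noteq> h'" "eps h = a" "eps h' = b"
    unfolding adj_rel_def by blast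
  then have "\<exists>e\<in>E. \<exists>x\<in>e. \<exists>y\<in>e. x \<noteq> y \<and> eps x = b \<and> eps y = a" by metis
  then show "(b, a) \<in> adj_rel F" unfolding adj_rel_def by simp
qed

lemma adj_V: "(v, w) \<in> adj_rel F \<Longrightarrow> w \<in> V"
  unfolding adj_rel_def using edge_sub eps_V by blast

lemma comp_refl: "v \<in> V \<Longrightarrow> v \<in> comp_of F v"
  unfolding comp_of_def by simp

lemma comp_sub: "comp_of F v \<subseteq> V"
  unfolding comp_of_def by auto

lemma comp_eq: "w \<in> comp_of F v \<Longrightarrow> comp_of F w = comp_of F v"
proof -
  assume "w \<in> comp_of F v"
  then have vw: "(v, w) \<in> (adj_rel F)\<^sup>*" unfolding comp_of_def by simp
  then have wv: "(w, v) \<in> (adj_rel F)\<^sup>*" using sym_rtrancl[OF adj_sym] by (meson symD)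
  show ?thesis unfolding comp_of_def using vw wv by (meson rtrancl_trans)
qed

lemma comp_comp: "v \<in> V \<Longrightarrow> comp_of F v \<in> components F"
  unfolding components_def by simp

lemma edge_in_comp: "e \<in> E \<Longrightarrow> h \<in> e \<Longrightarrow> eps ` e \<subseteq> comp_of F (eps h)"
proof
  fix x assume e: "e \<in> E" and h: "h \<in> e" and x: "x \<in> eps ` e"
  then obtain h' where h': "h' \<in> e" "x = eps h'" by auto
  have hv: "eps h \<in> V" using e h edge_sub eps_V by auto
  have xv: "x \<in> V" using e h' edge_sub eps_V by auto
  show "x \<in> comp_of F (eps h)"
  proof (cases "h = h'")
    case True then show ?thesis using h' hv comp_refl by simp
  next
    case False
    then have "(eps h, x) \<in> adj_rel F" unfolding adj_rel_def using e h h' by blast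
    then show ?thesis unfolding comp_of_def using xv by auto
  qed
qed

lemma comp_meet: "x \<in> comp_of F v \<Longrightarrow> x \<in> comp_of F w \<Longrightarrow> comp_of F v = comp_of F w"
  using comp_eq by metis

lemma components_E: "K \<in> components F \<Longrightarrow> \<exists>v\<in>V. K = comp_of F v"
  unfolding components_def by auto

lemma comp_mem_eq: "K \<in> components F \<Longrightarrow> w \<in> K \<Longrightarrow> comp_of F w = K"
  using components_E comp_eq by metis

end

locale cw = fr F Eb C for F :: "('v, 'h) graph" and Eb :: "'h set set" and C :: "'v set \<Rightarrow> 'h list" +
  fixes K :: "'v set"
  assumes K: "K \<in> components F"
begin

abbreviation "L \<equiv> C K"
definition k :: nat where "k = length (C K) div 2"

lemma euK: "closed_walk F L" "\<And>e. e \<in> E \<Longrightarrow> card {i. i < k \<and> traversal L i = e} = (if eps ` e \<subseteq> K then 1 else 0)"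
  using eu K unfolding euler_system_def k_def by auto

lemma lenL: "length L = 2 * k"
  using euK(1) unfolding closed_walk_def k_def by auto

lemma setL: "set L \<subseteq> H"
  using euK(1) unfolding closed_walk_def by auto

lemma trans: "t < k \<Longrightarrow> L ! (2*t) \<noteq> L ! (2*t+1) \<and> eps (L ! (2*t)) = eps (L ! (2*t+1))"
  using euK(1) unfolding closed_walk_def k_def by auto

lemma tr_E: "t < k \<Longrightarrow> traversal L t \<in> E"
  using euK(1) unfolding closed_walk_def k_def by auto

lemma tr_K: "t < k \<Longrightarrow> eps ` traversal L t \<subseteq> K"
proof -
  assume t: "t < k"
  have "t \<in> {i. i < k \<and> traversal L i = traversal L t}" using t by simp
  moreover have "finite {i. i < k \<and> traversal L i = traversal L t}" by simp
  ultimately have "card {i. i < k \<and> traversal L i = traversal L t} \<noteq> 0" by (metis card_0_eq empty_iff)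
  then show ?thesis using euK(2)[OF tr_E[OF t]] by (auto split: if_splits)
qed

lemma tr_inj: "t < k \<Longrightarrow> t' < k \<Longrightarrow> traversal L t = traversal L t' \<Longrightarrow> t = t'"
proof (rule ccontr)
  assume t: "t < k" "t' < k" "traversal L t = traversal L t'" "t \<noteq> t'"
  let ?S = "{i. i < k \<and> traversal L i = traversal L t}"
  have "{t, t'} \<subseteq> ?S" using t by auto
  moreover have "finite ?S" by simp
  ultimately have "card {t, t'} \<le> card ?S" by (rule card_mono[rotated])
  then have "2 \<le> card ?S" using t(4) by simp
  moreover have "card ?S \<le> 1" using euK(2)[OF tr_E[OF t(1)]] by simp
  ultimately show False by simp
qed

lemma tr_surj: "e \<in> E \<Longrightarrow> eps ` e \<subseteq> K \<Longrightarrow> \<exists>t<k. traversal L t = e"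
proof -
  assume e: "e \<in> E" "eps ` e \<subseteq> K"
  then have "card {i. i < k \<and> traversal L i = e} = 1" using euK(2) by simp
  then have "{i. i < k \<and> traversal L i = e} \<noteq> {}" by (metis card.empty zero_neq_one)
  then show ?thesis by blast
qed

lemma tr_card: "t < k \<Longrightarrow> card (traversal L t) = 2"
  using tr_E edge_card by blast

lemma tr_pair: "t < k \<Longrightarrow> L ! (2*t+1) \<noteq> L ! ((2*t+2) mod (2*k))"
proof
  assume t: "t < k" and eq: "L ! (2*t+1) = L ! ((2*t+2) mod (2*k))"
  have "card (traversal L t) = 2" using tr_card[OF t] .
  moreover have "traversal L t = {L ! (2*t+1)}" unfolding traversal_def lenL using eq by simp
  ultimately show False by simp
qed

lemma tr_disj: "t < k \<Longrightarrow> t' < k \<Longrightarrow> t \<noteq> t' \<Longrightarrow> traversal L t \<inter> traversal L t' = {}"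
  using tr_inj tr_E edge_disj by blast

lemma setL_eq: "set L = (\<Union>t<k. traversal L t)"
proof -
  have "even (length L)" using lenL by simp
  then show ?thesis using set_traversals[of L] lenL by simp
qed

lemma distL: "distinct L"
proof -
  have "card (set L) = card (\<Union>t<k. traversal L t)" using setL_eq by simp
  also have "\<dots> = (\<Sum>t<k. card (traversal L t))"
  proof (rule card_UN_disjoint)
    show "finite {..<k}" by simp
    show "\<forall>i\<in>{..<k}. finite (traversal L i)" unfolding traversal_def by simp
    show "\<forall>i\<in>{..<k}. \<forall>j\<in>{..<k}. i \<noteq> j \<longrightarrow> traversal L i \<inter> traversal L j = {}"
      using tr_disj by simp
  qed
  also have "\<dots> = (\<Sum>t<k. 2)" using tr_card by simp
  also have "\<dots> = length L" using lenL by simp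
  finally show ?thesis by (rule card_distinct)
qed

lemma pos_even: "t < k \<Longrightarrow> L ! (2*t) \<in> traversal L (prd k t)"
proof -
  assume t: "t < k"
  have "(2 * prd k t + 2) mod (2 * k) = 2 * t"
  proof (cases "t = 0")
    case True
    then have "2 * prd k t + 2 = 2 * k" unfolding prd_def using t by simp
    then show ?thesis using True by simp
  next
    case False
    then have "2 * prd k t + 2 = 2 * t" unfolding prd_def by simp
    then show ?thesis using t by simp
  qed
  then show ?thesis unfolding traversal_def lenL by simp
qed

lemma vert_K: "t < k \<Longrightarrow> eps (L ! (2*t)) \<in> K"
  using pos_even tr_K prd_lt by blast

lemma K_V: "K \<subseteq> V"
  using K components_E comp_sub by blast

definition I :: "'v \<Rightarrow> nat set" where
  "I v = {t. t < k \<and> eps (L ! (2*t)) = v}"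

lemma half_edges_at: 
  assumes v: "v \<in> K"
  shows "{h \<in> H. eps h = v} = (\<lambda>t. L ! (2*t)) ` I v \<union> (\<lambda>t. L ! (2*t+1)) ` I v"
proof
  show "{h \<in> H. eps h = v} \<subseteq> (\<lambda>t. L ! (2*t)) ` I v \<union> (\<lambda>t. L ! (2*t+1)) ` I v"
  proof
    fix h assume h: "h \<in> {h \<in> H. eps h = v}"
    then obtain e where e: "e \<in> E" "h \<in> e" using half_edge by blast
    have "eps ` e \<subseteq> comp_of F v" using edge_in_comp[OF e] h by simp
    also have "comp_of F v = K" using comp_mem_eq[OF K v] .
    finally obtain t where t: "t < k" "traversal L t = e" using tr_surj e by blast
    have "h \<in> set L" using setL_eq t e by auto
    then obtain q where q: "q < length L" "h = L ! q" by (auto simp: in_set_conv_nth)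
    show "h \<in> (\<lambda>t. L ! (2*t)) ` I v \<union> (\<lambda>t. L ! (2*t+1)) ` I v"
    proof (cases "even q")
      case True
      then obtain r where r: "q = 2 * r" by blast
      then have "r \<in> I v" unfolding I_def using q h lenL by auto
      then show ?thesis using q r by blast
    next
      case False
      then obtain r where r: "q = 2 * r + 1" by (metis oddE)
      then have rk: "r < k" using q lenL by simp
      then have "r \<in> I v" unfolding I_def using q h r trans[OF rk] by auto
      then show ?thesis using q r by blast
    qed
  qed
next
  show "(\<lambda>t. L ! (2*t)) ` I v \<union> (\<lambda>t. L ! (2*t+1)) ` I v \<subseteq> {h \<in> H. eps h = v}"
  proof
    fix h assume "h \<in> (\<lambda>t. L ! (2*t)) ` I v \<union> (\<lambda>t. L ! (2*t+1)) ` I v"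
    then obtain t where t: "t < k" "eps (L ! (2*t)) = v" "h = L ! (2*t) \<or> h = L ! (2*t+1)"
      unfolding I_def by auto
    have "L ! (2*t) \<in> set L" "L ! (2*t+1) \<in> set L" using t(1) lenL by auto
    then show "h \<in> {h \<in> H. eps h = v}" using t trans[OF t(1)] setL by auto
  qed
qed

lemma card_I: assumes v: "v \<in> K" shows "card (I v) = 2"
proof -
  have fin: "finite (I v)" unfolding I_def by simp
  have inj1: "inj_on (\<lambda>t. L ! (2*t)) (I v)"
    by (rule inj_onI) (use distL lenL in \<open>auto simp: I_def nth_eq_iff_index_eq\<close>)
  have inj2: "inj_on (\<lambda>t. L ! (2*t+1)) (I v)"
    by (rule inj_onI) (use distL lenL in \<open>auto simp: I_def nth_eq_iff_index_eq\<close>)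
  have disj: "(\<lambda>t. L ! (2*t)) ` I v \<inter> (\<lambda>t. L ! (2*t+1)) ` I v = {}"
  proof (rule ccontr)
    assume "(\<lambda>t. L ! (2*t)) ` I v \<inter> (\<lambda>t. L ! (2*t+1)) ` I v \<noteq> {}"
    then obtain t t' where tt: "t \<in> I v" "t' \<in> I v" "L ! (2*t) = L ! (2*t'+1)" by auto
    then have "2*t = 2*t'+1" using distL lenL by (auto simp: I_def nth_eq_iff_index_eq)
    then show False by presburger
  qed
  have "4 = card {h \<in> H. eps h = v}" using reg v K_V unfolding four_regular_def by auto
  also have "\<dots> = card ((\<lambda>t. L ! (2*t)) ` I v) + card ((\<lambda>t. L ! (2*t+1)) ` I v)"
    unfolding half_edges_at[OF v] using fin disj by (simp add: card_Un_disjoint)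
  also have "\<dots> = card (I v) + card (I v)" using card_image inj1 inj2 by metis
  finally show ?thesis by simp
qed

end

context cw
begin

lemma bsK: "\<exists>!e. e \<in> Eb \<and> eps ` e \<subseteq> K"
  using bs K unfolding based_def by blast

lemma Eb_E: "Eb \<subseteq> E" using bs unfolding based_def by blast

definition e0 where "e0 = (THE e. e \<in> Eb \<and> eps ` e \<subseteq> K)"

lemma e0: "e0 \<in> Eb" "eps ` e0 \<subseteq> K"
  using theI'[OF bsK] unfolding e0_def by auto

lemma e0_uniq: "e \<in> Eb \<Longrightarrow> eps ` e \<subseteq> K \<Longrightarrow> e = e0"
  using bsK e0 by blast

definition p where "p = (THE t. t < k \<and> traversal L t = e0)"

lemma p_ex1: "\<exists>!t. t < k \<and> traversal L t = e0"
proof -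
  obtain t where "t < k" "traversal L t = e0" using tr_surj e0 Eb_E by blast
  then show ?thesis using tr_inj by blast
qed

lemma p: "p < k" "traversal L p = e0"
  using theI'[OF p_ex1] unfolding p_def by auto

lemma Eb_meet: "e \<in> Eb \<Longrightarrow> t < k \<Longrightarrow> h \<in> e \<Longrightarrow> h \<in> traversal L t \<Longrightarrow> t = p"
proof -
  assume a: "e \<in> Eb" "t < k" "h \<in> e" "h \<in> traversal L t"
  have "e = traversal L t" using edge_disj[of e "traversal L t" h] a Eb_E tr_E by blast
  then have "e = e0" using e0_uniq a tr_K by blast
  then show "t = p" using tr_inj[of t p] p a \<open>e = traversal L t\<close> by simp
qed

lemma avoid_iff:
  assumes i: "i < k" and j: "j < k" and ij: "i \<noteq> j"
  shows "(\<forall>e\<in>Eb. e \<inter> set (seg L i j) = {}) \<longleftrightarrow> \<not> cin k i j p"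
proof -
  interpret segctx L k i j using lenL i j ij by unfold_locales auto
  show ?thesis
  proof
    assume av: "\<forall>e\<in>Eb. e \<inter> set (seg L i j) = {}"
    show "\<not> cin k i j p"
    proof
      assume c: "cin k i j p"
      have "traversal L p \<subseteq> set (seg L i j)" using seg_set c p by auto
      then have "e0 \<subseteq> set (seg L i j)" using p by simp
      moreover obtain h where "h \<in> e0" using edge_ne e0 Eb_E by blast
      ultimately show False using av e0 by blast
    qed
  next
    assume nc: "\<not> cin k i j p"
    show "\<forall>e\<in>Eb. e \<inter> set (seg L i j) = {}"
    proof (intro ballI equals0I)
      fix e h assume e: "e \<in> Eb" and h: "h \<in> e \<inter> set (seg L i j)"
      then obtain t where t: "t < k" "cin k i j t" "h \<in> traversal L t" using seg_set by auto
      then have "t = p" using Eb_meet e h by blast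
      then show False using nc t by simp
    qed
  qed
qed

definition ij :: "'v \<Rightarrow> nat \<times> nat" where
  "ij v = (SOME ab. fst ab \<in> I v \<and> snd ab \<in> I v \<and> fst ab \<noteq> snd ab \<and> \<not> cin k (fst ab) (snd ab) p)"

definition iv where "iv v = fst (ij v)"
definition jv where "jv v = snd (ij v)"

lemma I_two: "v \<in> K \<Longrightarrow> \<exists>a b. a \<noteq> b \<and> I v = {a, b}"
  using card_I by (metis card_2_iff)

lemma I_lt: "t \<in> I v \<Longrightarrow> t < k" unfolding I_def by simp

lemma ij_ok: assumes v: "v \<in> K"
  shows "iv v \<in> I v \<and> jv v \<in> I v \<and> iv v \<noteq> jv v \<and> \<not> cin k (iv v) (jv v) p"
proof -
  obtain a b where ab: "a \<noteq> b" "I v = {a, b}" using I_two[OF v] by blast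
  have "a < k" "b < k" using ab I_lt by auto
  then have "\<not> cin k a b p \<or> \<not> cin k b a p" using cin_swap[of a k b p] ab p by auto
  then have "\<exists>ab. fst ab \<in> I v \<and> snd ab \<in> I v \<and> fst ab \<noteq> snd ab \<and> \<not> cin k (fst ab) (snd ab) p"
    using ab by (metis fst_conv snd_conv insertCI)
  then show ?thesis unfolding iv_def jv_def ij_def by (rule someI_ex)
qed

lemma I_eq: assumes v: "v \<in> K" shows "I v = {iv v, jv v}"
proof -
  obtain a b where ab: "a \<noteq> b" "I v = {a, b}" using I_two[OF v] by blast
  then show ?thesis using ij_ok[OF v] by auto
qed

lemma ivjv_lt: "v \<in> K \<Longrightarrow> iv v < k \<and> jv v < k"
  using ij_ok I_lt by blast

lemma Gamma_eq: assumes v: "v \<in> K"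
  shows "induced_circuit F Eb C v = seg L (iv v) (jv v)"
proof -
  have cv: "comp_of F v = K" using comp_mem_eq[OF K v] .
  have Ieq: "{i. i < length L div 2 \<and> eps (L ! (2*i)) = v} = I v" unfolding I_def k_def by simp
  have ok: "iv v \<in> I v" "jv v \<in> I v" "iv v \<noteq> jv v" "\<not> cin k (iv v) (jv v) p" using ij_ok[OF v] by auto
  have lt: "iv v < k" "jv v < k" using ivjv_lt[OF v] by auto
  show ?thesis unfolding induced_circuit_def Let_def cv Ieq
  proof (rule the_equality)
    show "\<exists>i\<in>I v. \<exists>j\<in>I v. i \<noteq> j \<and> seg L (iv v) (jv v) = seg L i j \<and> (\<forall>e\<in>Eb. e \<inter> set (seg L (iv v) (jv v)) = {})"
      using ok avoid_iff[OF lt ok(3)] by blast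
  next
    fix S assume "\<exists>i\<in>I v. \<exists>j\<in>I v. i \<noteq> j \<and> S = seg L i j \<and> (\<forall>e\<in>Eb. e \<inter> set S = {})"
    then obtain i j where s: "i \<in> I v" "j \<in> I v" "i \<noteq> j" "S = seg L i j" "\<forall>e\<in>Eb. e \<inter> set S = {}" by blast
    have ltij: "i < k" "j < k" using s I_lt by auto
    have nc: "\<not> cin k i j p" using avoid_iff[OF ltij s(3)] s by simp
    have "(i = iv v \<and> j = jv v) \<or> (i = jv v \<and> j = iv v)" using s I_eq[OF v] by auto
    moreover have "\<not> (i = jv v \<and> j = iv v)"
    proof
      assume "i = jv v \<and> j = iv v"
      then show False using nc ok cin_swap[of "iv v" k "jv v" p] lt p by auto
    qed
    ultimately show "S = seg L (iv v) (jv v)" using s by auto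
  qed
qed


definition sg :: "'h set \<Rightarrow> nat \<Rightarrow> int" where
  "sg T t = (if L ! (2*t+1) \<in> T then 1 else -1)"

lemma sigma_Gamma: assumes v: "v \<in> K"
  shows "sigma T (induced_circuit F Eb C v) e =
    (\<Sum>t<k. if cin k (iv v) (jv v) t then (if traversal L t = e then sg T t else 0) else 0)"
proof -
  have ok: "iv v \<noteq> jv v" using ij_ok[OF v] by auto
  have lt: "iv v < k" "jv v < k" using ivjv_lt[OF v] by auto
  interpret segctx L k "iv v" "jv v" using lenL lt ok by unfold_locales auto
  show ?thesis unfolding Gamma_eq[OF v] seg_sigma sg_def by simp
qed

lemma sig_at: assumes v: "v \<in> K" and t0: "t0 < k"
  shows "sigma T (induced_circuit F Eb C v) (traversal L t0) = (if cin k (iv v) (jv v) t0 then sg T t0 else 0)"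
proof -
  have "sigma T (induced_circuit F Eb C v) (traversal L t0) =
     (\<Sum>t<k. if t = t0 then (if cin k (iv v) (jv v) t0 then sg T t0 else 0) else 0)"
    unfolding sigma_Gamma[OF v]
  proof (rule sum.cong[OF refl])
    fix t assume "t \<in> {..<k}"
    then have t: "t < k" by simp
    show "(if cin k (iv v) (jv v) t then if traversal L t = traversal L t0 then sg T t else 0 else 0) =
          (if t = t0 then if cin k (iv v) (jv v) t0 then sg T t0 else 0 else 0)"
      using tr_inj[OF t t0] by auto
  qed
  also have "\<dots> = (if cin k (iv v) (jv v) t0 then sg T t0 else 0)" using t0 by simp
  finally show ?thesis .
qed

lemma sig_off: assumes v: "v \<in> K" and off: "\<forall>t<k. traversal L t \<noteq> e"
  shows "sigma T (induced_circuit F Eb C v) e = 0"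
  unfolding sigma_Gamma[OF v] using off by (intro sum.neutral) auto

lemma Gamma_cw: assumes v: "v \<in> K"
  shows "closed_walk (delete_edges F Eb) (induced_circuit F Eb C v)"
proof -
  have ok: "iv v \<in> I v" "jv v \<in> I v" "iv v \<noteq> jv v" "\<not> cin k (iv v) (jv v) p" using ij_ok[OF v] by auto
  have lt: "iv v < k" "jv v < k" using ivjv_lt[OF v] by auto
  interpret segctx L k "iv v" "jv v" using lenL lt ok by unfold_locales auto
  let ?S = "seg L (iv v) (jv v)"
  have notEb: "traversal L t \<notin> Eb" if tt: "t < k" "cin k (iv v) (jv v) t" for t
  proof
    assume "traversal L t \<in> Eb"
    moreover obtain h where "h \<in> traversal L t" using edge_ne tr_E tt(1) by blast
    ultimately have "t = p" using Eb_meet tt(1) by blast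
    then show False using tt ok by simp
  qed
  have setS: "set ?S \<subseteq> H - \<Union>Eb"
  proof
    fix h assume "h \<in> set ?S"
    then obtain t where t: "t < k" "cin k (iv v) (jv v) t" "h \<in> traversal L t" using seg_set by auto
    have "h \<in> H" using t edge_sub tr_E by blast
    moreover have "h \<notin> \<Union>Eb"
    proof
      assume "h \<in> \<Union>Eb"
      then obtain e where "e \<in> Eb" "h \<in> e" by auto
      then have "t = p" using Eb_meet t by blast
      then show False using t ok by simp
    qed
    ultimately show "h \<in> H - \<Union>Eb" by simp
  qed
  have steps: "?S ! (2*r) \<noteq> ?S ! (2*r+1) \<and> eps (?S ! (2*r)) = eps (?S ! (2*r+1))
      \<and> traversal ?S r \<in> E - Eb" if r: "r < A" for r
  proof -
    let ?t = "(iv v + r) mod k"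
    have tmem: "?t \<in> {t. t < k \<and> cin k (iv v) (jv v) t}"
      using rot_image[OF lt] r unfolding A_def by blast
    then have tk: "?t < k" and tc: "cin k (iv v) (jv v) ?t" by auto
    have trS: "traversal ?S r \<in> E - Eb" using seg_traversal[OF r] tr_E[OF tk] notEb[OF tk tc] by simp
    have odd: "?S ! (2*r+1) = L ! (2*?t+1)" using seg_odd[OF r] .
    show ?thesis
    proof (cases "r = 0")
      case True
      have s0: "?S ! (2*r) = L ! (2 * jv v)" using seg_0 True by simp
      have s1: "?S ! (2*r+1) = L ! (2 * iv v + 1)" using odd True lt by simp
      have e1: "eps (L ! (2 * jv v)) = v" using ok unfolding I_def by simp
      have e2: "eps (L ! (2 * iv v + 1)) = v" using ok trans[OF lt(1)] unfolding I_def by simp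
      have ne: "L ! (2 * jv v) \<noteq> L ! (2 * iv v + 1)"
      proof
        assume "L ! (2 * jv v) = L ! (2 * iv v + 1)"
        then have "2 * jv v = 2 * iv v + 1" using distL lenL lt by (simp add: nth_eq_iff_index_eq)
        then show False by presburger
      qed
      show ?thesis using s0 s1 e1 e2 ne trS by simp
    next
      case False
      have s0: "?S ! (2*r) = L ! (2*?t)" using seg_even False r by simp
      show ?thesis using s0 odd trans[OF tk] trS by simp
    qed
  qed
  show ?thesis unfolding Gamma_eq[OF v] closed_walk_def delete_edges_def
    using setS steps seg_length by auto
qed

end

definition incg :: "('v, 'h) graph \<Rightarrow> 'h set \<Rightarrow> 'v \<Rightarrow> 'h set \<Rightarrow> 'a::comm_ring_1" where
  "incg G T v e = of_nat (card {h\<in>e. h \<notin> T \<and> geps G h = v}) - of_nat (card {h\<in>e. h \<in> T \<and> geps G h = v})"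

lemma incidence_incg: "incidence G T v e = incg G T v e"
  unfolding incidence_def incg_def by simp

lemma inc_pair:
  assumes ab: "a \<noteq> b" and c: "card ({a, b} \<inter> T) = 1"
  shows "(incg G T v {a, b} :: 'a::comm_ring_1) * (if a \<in> T then 1 else -1)
       = (if geps G b = v then 1 else 0) - (if geps G a = v then 1 else 0)"
proof (cases "a \<in> T")
  case True
  then have bT: "b \<notin> T" using c ab by (auto simp: card_insert_if split: if_splits)
  have s1: "{h\<in>{a, b}. h \<notin> T \<and> geps G h = v} = (if geps G b = v then {b} else {})" using True bT by auto
  have s2: "{h\<in>{a, b}. h \<in> T \<and> geps G h = v} = (if geps G a = v then {a} else {})" using True bT by auto
  show ?thesis unfolding incg_def s1 s2 using True by simp
next
  case False
  have bT: "b \<in> T"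
  proof (rule ccontr)
    assume "b \<notin> T"
    then have "{a, b} \<inter> T = {}" using False by auto
    then show False using c by simp
  qed
  have s1: "{h\<in>{a, b}. h \<notin> T \<and> geps G h = v} = (if geps G a = v then {a} else {})" using False bT by auto
  have s2: "{h\<in>{a, b}. h \<in> T \<and> geps G h = v} = (if geps G b = v then {b} else {})" using False bT by auto
  show ?thesis unfolding incg_def s1 s2 using False by simp
qed

lemma sgn_sq: "(of_int (if P then 1 else -1) :: 'a::comm_ring_1) * of_int (if P then 1 else -1) = 1"
  by simp

context fr
begin

abbreviation "G \<equiv> delete_edges F Eb"

lemma G_simps: "gV G = V" "gH G = H - \<Union>Eb" "gE G = E - Eb" "geps G = eps"
  unfolding delete_edges_def by simp_all

lemma finE: "finite E"
proof -
  have "E \<subseteq> Pow H" using edge_sub by auto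
  then show ?thesis using finH by (meson finite_Pow_iff finite_subset)
qed

lemma walk_balance:
  assumes W: "closed_walk G W" and T: "orientation G T"
  shows "(\<Sum>e\<in>gE G. incg G T v e * sigma T W e) = 0"
proof -
  define n where "n = length W div 2"
  have lenW: "length W = 2 * n" using W unfolding closed_walk_def n_def by auto
  let ?s = "\<lambda>i. (if W ! (2*i+1) \<in> T then 1 else -1) :: int"
  have trG: "traversal W i \<in> gE G" if "i < n" for i using W that unfolding closed_walk_def n_def by auto
  have trans: "eps (W ! (2*i)) = eps (W ! (2*i+1))" if "i < n" for i
    using W that unfolding closed_walk_def n_def G_simps by auto
  have "(\<Sum>e\<in>gE G. incg G T v e * sigma T W e)
      = (\<Sum>e\<in>gE G. \<Sum>i<n. if traversal W i = e then incg G T v e * ?s i else 0)"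
    unfolding sigma_def n_def[symmetric] sum_distrib_left by (intro sum.cong refl) simp
  also have "\<dots> = (\<Sum>i<n. \<Sum>e\<in>gE G. if traversal W i = e then incg G T v e * ?s i else 0)"
    by (rule sum.swap)
  also have "\<dots> = (\<Sum>i<n. incg G T v (traversal W i) * ?s i)"
  proof (rule sum.cong[OF refl])
    fix i assume "i \<in> {..<n}"
    then have "traversal W i \<in> gE G" using trG by simp
    moreover have "finite (gE G)" using finE G_simps by simp
    ultimately show "(\<Sum>e\<in>gE G. if traversal W i = e then incg G T v e * ?s i else 0) = incg G T v (traversal W i) * ?s i"
      by (simp add: sum.delta)
  qed
  also have "\<dots> = (\<Sum>i<n. (if eps (W ! ((2*i+2) mod (2*n))) = v then 1 else 0) - (if eps (W ! (2*i+1)) = v then 1 else 0))"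
  proof (rule sum.cong[OF refl])
    fix i assume "i \<in> {..<n}"
    then have i: "i < n" by simp
    have eE: "traversal W i \<in> E" using trG[OF i] G_simps by simp
    have ne: "W ! (2*i+1) \<noteq> W ! ((2*i+2) mod (2*n))"
    proof
      assume "W ! (2*i+1) = W ! ((2*i+2) mod (2*n))"
      then have "traversal W i = {W ! (2*i+1)}" unfolding traversal_def lenW by simp
      then show False using edge_card[OF eE] by simp
    qed
    have c: "card (traversal W i \<inter> T) = 1" using T trG[OF i] unfolding orientation_def by blast
    show "incg G T v (traversal W i) * ?s i = (if eps (W ! ((2*i+2) mod (2*n))) = v then 1 else 0) - (if eps (W ! (2*i+1)) = v then 1 else 0)"
      using inc_pair[OF ne, of T G v] c unfolding traversal_def lenW G_simps by simp
  qed
  also have "\<dots> = (\<Sum>i<n. (if eps (W ! (2 * ((i+1) mod n))) = v then 1 else 0)) - (\<Sum>i<n. (if eps (W ! (2*i)) = v then 1 else 0))"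
  proof -
    have a: "(\<Sum>i<n. (if eps (W ! (2*i+1)) = v then 1 else (0::int))) = (\<Sum>i<n. (if eps (W ! (2*i)) = v then 1 else 0))"
    proof (rule sum.cong[OF refl])
      fix i assume "i \<in> {..<n}"
      then show "(if eps (W ! (2*i+1)) = v then 1 else (0::int)) = (if eps (W ! (2*i)) = v then 1 else 0)"
        using trans[of i] by simp
    qed
    have b: "(2*i+2) mod (2*n) = 2 * ((i+1) mod n)" for i
      using mod2_even[of "i+1" n] by (simp add: algebra_simps)
    show ?thesis unfolding sum_subtractf a b ..
  qed
  also have "(\<Sum>i<n. (if eps (W ! (2 * ((i+1) mod n))) = v then 1 else 0)) = (\<Sum>s<n. (if eps (W ! (2*s)) = v then 1 else (0::int)))"
    using shift_sum[of "\<lambda>s i. if eps (W ! (2*s)) = v then 1 else (0::int)" n] by simp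
  finally show ?thesis by simp
qed

end

context cw
begin

definition yy :: "'h set \<Rightarrow> ('h set \<Rightarrow> 'a::comm_ring_1) \<Rightarrow> nat \<Rightarrow> 'a" where
  "yy T x t = of_int (sg T t) * x (traversal L t)"

lemma sgsq_K: "(of_int (sg T t) :: 'a::comm_ring_1) * of_int (sg T t) = 1"
  unfolding sg_def by simp

lemma tr_notEb: "t < k \<Longrightarrow> t \<noteq> p \<Longrightarrow> traversal L t \<notin> Eb"
proof
  assume t: "t < k" "t \<noteq> p" "traversal L t \<in> Eb"
  obtain h where "h \<in> traversal L t" using edge_ne tr_E t(1) by blast
  then show False using Eb_meet t by blast
qed

lemma veq:
  fixes x :: "'h set \<Rightarrow> 'a::comm_ring_1"
  assumes v: "v \<in> K" and T: "orientation G T" and x0: "\<forall>e. e \<notin> gE G \<longrightarrow> x e = 0"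
  shows "(\<Sum>e\<in>gE G. incg G T v e * x e) =
     (yy T x (prd k (iv v)) - yy T x (iv v)) + (yy T x (prd k (jv v)) - yy T x (jv v))"
proof -
  let ?y = "yy T x"
  have "(\<Sum>e\<in>gE G. incg G T v e * x e) = (\<Sum>e\<in>E. incg G T v e * x e)"
    by (rule sum.mono_neutral_left) (use finE x0 G_simps in auto)
  also have "\<dots> = (\<Sum>e\<in>traversal L ` {..<k}. incg G T v e * x e)"
  proof (rule sum.mono_neutral_right)
    show "finite E" by (rule finE)
    show "traversal L ` {..<k} \<subseteq> E" using tr_E by auto
    show "\<forall>e\<in>E - traversal L ` {..<k}. incg G T v e * x e = 0"
    proof
      fix e assume e: "e \<in> E - traversal L ` {..<k}"
      have none: "\<forall>h\<in>e. eps h \<noteq> v"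
      proof (intro ballI notI)
        fix h assume h: "h \<in> e" "eps h = v"
        have "eps ` e \<subseteq> K" using edge_in_comp[of e h] e h comp_mem_eq[OF K v] by auto
        then obtain t where "t < k" "traversal L t = e" using tr_surj e by blast
        then show False using e by auto
      qed
      have s: "{h\<in>e. h \<notin> T \<and> geps G h = v} = {}" "{h\<in>e. h \<in> T \<and> geps G h = v} = {}"
        using none G_simps by auto
      show "incg G T v e * x e = 0" unfolding incg_def s by simp
    qed
  qed
  also have "\<dots> = (\<Sum>t<k. incg G T v (traversal L t) * x (traversal L t))"
    by (rule sum.reindex_cong[where l = "traversal L"]) (use tr_inj in \<open>auto simp: inj_on_def\<close>)
  also have "\<dots> = (\<Sum>t<k. ((if eps (L ! ((2*t+2) mod (2*k))) = v then 1 else 0)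
                         - (if eps (L ! (2*t+1)) = v then 1 else 0)) * ?y t)"
  proof (rule sum.cong[OF refl])
    fix t assume "t \<in> {..<k}"
    then have t: "t < k" by simp
    show "incg G T v (traversal L t) * x (traversal L t) =
       ((if eps (L ! ((2*t+2) mod (2*k))) = v then 1 else 0) - (if eps (L ! (2*t+1)) = v then 1 else 0)) * ?y t"
    proof (cases "t = p")
      case True
      have "traversal L t \<notin> gE G" using True p e0 G_simps by simp
      then have "x (traversal L t) = 0" using x0 by simp
      then show ?thesis unfolding yy_def by simp
    next
      case False
      have tG: "traversal L t \<in> gE G" using tr_notEb[OF t False] tr_E[OF t] G_simps by simp
      have c: "card (traversal L t \<inter> T) = 1" using T tG unfolding orientation_def by blast
      have sgx: "(of_int (sg T t) :: 'a) = (if L ! (2*t+1) \<in> T then 1 else -1)" by (simp add: sg_def)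
      have trd: "traversal L t = {L ! (2*t+1), L ! ((2*t+2) mod (2*k))}" unfolding traversal_def lenL ..
      have ip0: "(incg G T v {L ! (2*t+1), L ! ((2*t+2) mod (2*k))} :: 'a) * (if L ! (2*t+1) \<in> T then 1 else -1)
          = (if geps G (L ! ((2*t+2) mod (2*k))) = v then 1 else 0) - (if geps G (L ! (2*t+1)) = v then 1 else 0)"
        by (rule inc_pair[OF tr_pair[OF t]]) (use c trd in simp)
      have ip: "(incg G T v (traversal L t) :: 'a) * of_int (sg T t)
          = (if eps (L ! ((2*t+2) mod (2*k))) = v then 1 else 0) - (if eps (L ! (2*t+1)) = v then 1 else 0)"
        using ip0 unfolding sgx trd G_simps .
      have "incg G T v (traversal L t) * x (traversal L t)
          = (incg G T v (traversal L t) * of_int (sg T t)) * (of_int (sg T t) * x (traversal L t))"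
        using sgn_sq[of "L ! (2*t+1) \<in> T"] unfolding sg_def by (simp add: algebra_simps)
      then show ?thesis unfolding ip yy_def by simp
    qed
  qed
  also have "\<dots> = (\<Sum>s<k. if eps (L ! (2*s)) = v then ?y (prd k s) - ?y s else 0)"
  proof -
    have b: "(2*t+2) mod (2*k) = 2 * ((t+1) mod k)" for t
      using mod2_even[of "t+1" k] by (simp add: algebra_simps)
    have a: "(\<Sum>t<k. (if eps (L ! (2*t+1)) = v then 1 else 0) * ?y t) = (\<Sum>t<k. (if eps (L ! (2*t)) = v then 1 else 0) * ?y t)"
    proof (rule sum.cong[OF refl])
      fix t assume "t \<in> {..<k}"
      then show "(if eps (L ! (2*t+1)) = v then 1 else 0) * ?y t = (if eps (L ! (2*t)) = v then 1 else 0) * ?y t"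
        using trans[of t] by simp
    qed
    have c: "(\<Sum>t<k. (if eps (L ! (2 * ((t+1) mod k))) = v then 1 else 0) * ?y t)
        = (\<Sum>s<k. (if eps (L ! (2*s)) = v then 1 else 0) * ?y (prd k s))"
      using shift_sum[of "\<lambda>s t. (if eps (L ! (2*s)) = v then 1 else 0) * ?y t" k] by simp
    show ?thesis unfolding b left_diff_distrib sum_subtractf a c
      unfolding sum_subtractf[symmetric] by (intro sum.cong refl) simp
  qed
  also have "\<dots> = (\<Sum>s\<in>I v. ?y (prd k s) - ?y s)"
  proof -
    have "I v = {t\<in>{..<k}. eps (L ! (2*t)) = v}" unfolding I_def by auto
    then show ?thesis using sum.inter_filter[of "{..<k}" "\<lambda>s. ?y (prd k s) - ?y s" "\<lambda>t. eps (L ! (2*t)) = v"] by simp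
  qed
  also have "\<dots> = (?y (prd k (iv v)) - ?y (iv v)) + (?y (prd k (jv v)) - ?y (jv v))"
    using I_eq[OF v] ij_ok[OF v] by simp
  finally show ?thesis .
qed

end

context fr
begin

abbreviation "Gm \<equiv> induced_circuit F Eb C"

lemma comp_in: "w \<in> V \<Longrightarrow> comp_of F w \<in> components F" by (rule comp_comp)

lemma edge_loc: assumes e: "e \<in> E"
  shows "\<exists>K\<in>components F. \<exists>t0 < cw.k C K. traversal (C K) t0 = e"
proof -
  obtain h where h: "h \<in> e" using edge_ne e by blast
  have hv: "eps h \<in> V" using e h edge_sub eps_V by blast
  let ?K = "comp_of F (eps h)"
  have K: "?K \<in> components F" using comp_in hv .
  interpret K: cw F Eb C ?K using K by unfold_locales
  have ek: "eps ` e \<subseteq> ?K" using edge_in_comp[OF e h] .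
  obtain t where "t < K.k" "traversal (C ?K) t = e" using K.tr_surj[OF e ek] by blast
  then show ?thesis using K by blast
qed

lemma sig_loc:
  assumes K: "K \<in> components F" and t0: "t0 < cw.k C K" and w: "w \<in> V"
  shows "sigma T (Gm w) (traversal (C K) t0) =
    (if w \<in> K then (if cin (cw.k C K) (cw.iv F Eb C K w) (cw.jv F Eb C K w) t0 then cw.sg C K T t0 else 0) else 0)"
proof (cases "w \<in> K")
  case True
  interpret K: cw F Eb C K using K by unfold_locales
  show ?thesis using K.sig_at[OF True t0] True by simp
next
  case False
  interpret K: cw F Eb C K using K by unfold_locales
  let ?K' = "comp_of F w"
  have K': "?K' \<in> components F" using comp_in w .
  interpret K': cw F Eb C ?K' using K' by unfold_locales
  have wK': "w \<in> ?K'" using comp_refl w .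
  have off: "\<forall>t<K'.k. traversal (C ?K') t \<noteq> traversal (C K) t0"
  proof (intro allI impI notI)
    fix t assume t: "t < K'.k" and eq: "traversal (C ?K') t = traversal (C K) t0"
    obtain h where h: "h \<in> traversal (C K) t0" using edge_ne K.tr_E[OF t0] by blast
    have "eps h \<in> K" using K.tr_K[OF t0] h by blast
    moreover have "eps h \<in> ?K'" using K'.tr_K[OF t] h eq by blast
    ultimately have "comp_of F (eps h) = K" "comp_of F (eps h) = ?K'"
      using comp_mem_eq[OF K] comp_mem_eq[OF K'] by blast+
    then have "?K' = K" by simp
    then show False using wK' False by simp
  qed
  show ?thesis using K'.sig_off[OF wK' off] False by simp
qed

lemma sig_offE: assumes e: "e \<notin> E" and w: "w \<in> V"
  shows "sigma T (Gm w) e = 0"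
proof -
  let ?K' = "comp_of F w"
  interpret K': cw F Eb C ?K' using comp_in w by unfold_locales
  have "\<forall>t<K'.k. traversal (C ?K') t \<noteq> e"
  proof (intro allI impI notI)
    fix t assume "t < K'.k" "traversal (C ?K') t = e"
    then show False using K'.tr_E[of t] e by simp
  qed
  then show ?thesis using K'.sig_off[OF comp_refl[OF w]] by simp
qed

lemma sum_loc:
  fixes c :: "'v \<Rightarrow> 'a::comm_ring_1"
  assumes K: "K \<in> components F" and t0: "t0 < cw.k C K"
  shows "(\<Sum>w\<in>V. c w * of_int (sigma T (Gm w) (traversal (C K) t0))) =
     of_int (cw.sg C K T t0) * (\<Sum>w\<in>K. if cin (cw.k C K) (cw.iv F Eb C K w) (cw.jv F Eb C K w) t0 then c w else 0)"
proof -
  interpret K: cw F Eb C K using K by unfold_locales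
  have "(\<Sum>w\<in>V. c w * of_int (sigma T (Gm w) (traversal (C K) t0))) =
        (\<Sum>w\<in>V. if w \<in> K then c w * of_int (if cin K.k (K.iv w) (K.jv w) t0 then K.sg T t0 else 0) else 0)"
    by (rule sum.cong[OF refl]) (simp add: sig_loc[OF K t0])
  also have "\<dots> = (\<Sum>w\<in>K. c w * of_int (if cin K.k (K.iv w) (K.jv w) t0 then K.sg T t0 else 0))"
  proof -
    have VK: "V \<inter> K = K" using K.K_V by blast
    show ?thesis using sum.inter_restrict[OF finV, of "\<lambda>w. c w * of_int (if cin K.k (K.iv w) (K.jv w) t0 then K.sg T t0 else 0)" K]
      unfolding VK by simp
  qed
  also have "\<dots> = (\<Sum>w\<in>K. of_int (K.sg T t0) * (if cin K.k (K.iv w) (K.jv w) t0 then c w else 0))"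
    by (rule sum.cong[OF refl]) simp
  finally show ?thesis by (simp add: sum_distrib_left)
qed

lemma sgsq: "K \<in> components F \<Longrightarrow> (of_int (cw.sg C K T t) :: 'a::comm_ring_1) * of_int (cw.sg C K T t) = 1"
proof -
  assume K: "K \<in> components F"
  interpret K: cw F Eb C K using K by unfold_locales
  show ?thesis by (rule K.sgsq_K)
qed

definition cc :: "'h set \<Rightarrow> ('h set \<Rightarrow> 'a::comm_ring_1) \<Rightarrow> 'v \<Rightarrow> 'a" where
  "cc T x w = (let K = comp_of F w in
     cw.yy C K T x (prd (cw.k C K) (cw.jv F Eb C K w)) - cw.yy C K T x (cw.jv F Eb C K w))"

lemma R1:
  fixes x :: "'h set \<Rightarrow> 'a::comm_ring_1"
  assumes T: "orientation G T" and x0: "\<forall>e. e \<notin> gE G \<longrightarrow> x e = 0"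
    and xv: "\<forall>v\<in>V. (\<Sum>e\<in>gE G. incg G T v e * x e) = 0"
  shows "x = (\<Sum>w\<in>V. (\<lambda>e. cc T x w * of_int (sigma T (Gm w) e)))"
proof
  fix e
  show "x e = (\<Sum>w\<in>V. (\<lambda>e. cc T x w * of_int (sigma T (Gm w) e))) e"
  proof (cases "e \<in> E")
    case False
    then have "x e = 0" using x0 G_simps by simp
    then show ?thesis unfolding sum_fun_app using sig_offE[OF False] by simp
  next
    case True
    then obtain K t0 where K: "K \<in> components F" and t0: "t0 < cw.k C K" and et: "traversal (C K) t0 = e"
      using edge_loc by blast
    interpret K: cw F Eb C K using K by unfold_locales
    have ccK: "cc T x w = K.yy T x (prd K.k (K.jv w)) - K.yy T x (K.jv w)" if "w \<in> K" for w
      unfolding cc_def Let_def comp_mem_eq[OF K that] ..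
    have finK: "finite K" using finite_subset[OF K.K_V finV] .
    have ypz: "K.yy T x K.p = 0"
    proof -
      have "traversal (C K) K.p \<notin> gE G" using K.p K.e0 G_simps by simp
      then show ?thesis unfolding K.yy_def using x0 by simp
    qed
    have ab: "\<forall>w\<in>K. K.iv w < K.k \<and> K.jv w < K.k \<and> K.iv w \<noteq> K.jv w \<and> \<not> cin K.k (K.iv w) (K.jv w) K.p"
    proof (intro ballI)
      fix w assume w: "w \<in> K"
      show "K.iv w < K.k \<and> K.jv w < K.k \<and> K.iv w \<noteq> K.jv w \<and> \<not> cin K.k (K.iv w) (K.jv w) K.p"
        using K.ij_ok[OF w] K.ivjv_lt[OF w] by simp
    qed
    have uq: "\<forall>t<K.k. \<exists>!w. w \<in> K \<and> (t = K.iv w \<or> t = K.jv w)"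
    proof (intro allI impI)
      fix t assume t: "t < K.k"
      let ?w = "eps (C K ! (2*t))"
      have wK: "?w \<in> K" using K.vert_K[OF t] .
      have "t \<in> K.I ?w" unfolding K.I_def using t by simp
      then have ex: "t = K.iv ?w \<or> t = K.jv ?w" using K.I_eq[OF wK] by simp
      show "\<exists>!w. w \<in> K \<and> (t = K.iv w \<or> t = K.jv w)"
      proof (rule ex1I[of _ ?w])
        show "?w \<in> K \<and> (t = K.iv ?w \<or> t = K.jv ?w)" using wK ex by simp
      next
        fix w' assume w': "w' \<in> K \<and> (t = K.iv w' \<or> t = K.jv w')"
        then have "t \<in> K.I w'" using K.I_eq[of w'] by auto
        then show "w' = ?w" unfolding K.I_def by simp
      qed
    qed
    have veq: "\<forall>w\<in>K. (K.yy T x (prd K.k (K.iv w)) - K.yy T x (K.iv w)) + (K.yy T x (prd K.k (K.jv w)) - K.yy T x (K.jv w)) = 0"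
    proof (intro ballI)
      fix w assume w: "w \<in> K"
      have "(\<Sum>e\<in>gE G. incg G T w e * x e) = 0" using xv K.K_V w by blast
      then show "(K.yy T x (prd K.k (K.iv w)) - K.yy T x (K.iv w)) + (K.yy T x (prd K.k (K.jv w)) - K.yy T x (K.jv w)) = 0"
        using K.veq[OF w T x0] by simp
    qed
    have y0: "K.yy T x t0 = (\<Sum>w\<in>K. if cin K.k (K.iv w) (K.jv w) t0 then K.yy T x (prd K.k (K.jv w)) - K.yy T x (K.jv w) else 0)"
      by (rule A1[OF finK K.p(1) ypz ab uq veq t0])
    have "(\<Sum>w\<in>V. (\<lambda>e. cc T x w * of_int (sigma T (Gm w) e))) e
        = (\<Sum>w\<in>V. cc T x w * of_int (sigma T (Gm w) (traversal (C K) t0)))"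
      unfolding sum_fun_app et ..
    also have "\<dots> = of_int (K.sg T t0) * (\<Sum>w\<in>K. if cin K.k (K.iv w) (K.jv w) t0 then cc T x w else 0)"
      by (rule sum_loc[OF K t0])
    also have "(\<Sum>w\<in>K. if cin K.k (K.iv w) (K.jv w) t0 then cc T x w else 0) = K.yy T x t0"
      unfolding y0 by (rule sum.cong[OF refl]) (simp add: ccK)
    also have "of_int (K.sg T t0) * K.yy T x t0 = x e"
      unfolding K.yy_def et by (simp only: mult.assoc[symmetric] sgsq[OF K, of T t0] mult_1)
    finally show ?thesis by simp
  qed
qed

lemma R2:
  fixes c :: "'v \<Rightarrow> 'a::comm_ring_1"
  assumes z: "\<forall>e. (\<Sum>w\<in>V. c w * of_int (sigma T (Gm w) e)) = 0" and w0: "w0 \<in> V"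
  shows "c w0 = 0"
proof -
  let ?K = "comp_of F w0"
  have K: "?K \<in> components F" using comp_in w0 .
  interpret K: cw F Eb C ?K using K by unfold_locales
  have finK: "finite ?K" using finite_subset[OF K.K_V finV] .
  have ab: "\<forall>w\<in>?K. K.iv w < K.k \<and> K.jv w < K.k \<and> K.iv w \<noteq> K.jv w"
  proof (intro ballI)
    fix w assume w: "w \<in> ?K"
    show "K.iv w < K.k \<and> K.jv w < K.k \<and> K.iv w \<noteq> K.jv w"
      using K.ij_ok[OF w] K.ivjv_lt[OF w] by simp
  qed
  have uq: "\<forall>t<K.k. \<exists>!w. w \<in> ?K \<and> (t = K.iv w \<or> t = K.jv w)"
  proof (intro allI impI)
    fix t assume t: "t < K.k"
    let ?w = "eps (C ?K ! (2*t))"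
    have wK: "?w \<in> ?K" using K.vert_K[OF t] .
    have "t \<in> K.I ?w" unfolding K.I_def using t by simp
    then have ex: "t = K.iv ?w \<or> t = K.jv ?w" using K.I_eq[OF wK] by simp
    show "\<exists>!w. w \<in> ?K \<and> (t = K.iv w \<or> t = K.jv w)"
    proof (rule ex1I[of _ ?w])
      show "?w \<in> ?K \<and> (t = K.iv ?w \<or> t = K.jv ?w)" using wK ex by simp
    next
      fix w' assume w': "w' \<in> ?K \<and> (t = K.iv w' \<or> t = K.jv w')"
      then have "t \<in> K.I w'" using K.I_eq[of w'] by auto
      then show "w' = ?w" unfolding K.I_def by simp
    qed
  qed
  have zz: "\<forall>t<K.k. (\<Sum>w\<in>?K. if cin K.k (K.iv w) (K.jv w) t then c w else 0) = 0"
  proof (intro allI impI)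
    fix t assume t: "t < K.k"
    have "of_int (K.sg T t) * (\<Sum>w\<in>?K. if cin K.k (K.iv w) (K.jv w) t then c w else 0) = 0"
      using z sum_loc[OF K t, where c = c and T = T] by simp
    then have "of_int (K.sg T t) * (of_int (K.sg T t) * (\<Sum>w\<in>?K. if cin K.k (K.iv w) (K.jv w) t then c w else 0)) = 0"
      by simp
    then show "(\<Sum>w\<in>?K. if cin K.k (K.iv w) (K.jv w) t then c w else 0) = 0"
      by (simp only: mult.assoc[symmetric] sgsq[OF K, of T t] mult_1)
  qed
  show ?thesis by (rule A2[OF finK ab uq zz comp_refl[OF w0]])
qed

end

lemma mod_q: "module (qscale :: rat \<Rightarrow> ('h set \<Rightarrow> rat) \<Rightarrow> ('h set \<Rightarrow> rat))"
  by unfold_locales (simp_all add: qscale_def fun_eq_iff algebra_simps)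

lemma mod_z: "module (zscale :: int \<Rightarrow> ('h set \<Rightarrow> int) \<Rightarrow> ('h set \<Rightarrow> int))"
  by unfold_locales (simp_all add: zscale_def fun_eq_iff algebra_simps)

lemma incg_of_int: "(incg G T v e :: 'a::comm_ring_1) = of_int (incg G T v e)"
  unfolding incg_def by simp

context fr
begin

lemma Gm_cw: "w \<in> V \<Longrightarrow> closed_walk G (Gm w)"
proof -
  assume w: "w \<in> V"
  interpret K': cw F Eb C "comp_of F w" using comp_in w by unfold_locales
  show ?thesis using K'.Gamma_cw[OF comp_refl[OF w]] .
qed

lemma sigma_off_walk: assumes W: "closed_walk G W" and e: "e \<notin> gE G"
  shows "sigma T W e = 0"
  unfolding sigma_def
proof (rule sum.neutral, rule ballI)
  fix i assume "i \<in> {..<length W div 2}"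
  then have "traversal W i \<in> gE G" using W unfolding closed_walk_def by auto
  then show "(if traversal W i = e then if W ! (2 * i + 1) \<in> T then 1 else - 1 else 0) = 0" using e by auto
qed

lemma walk_space:
  assumes W: "closed_walk G W" and T: "orientation G T"
  shows "qsigma T W \<in> cycle_space G T"
  unfolding cycle_space_def
proof (intro CollectI conjI allI impI ballI)
  fix e assume "e \<notin> gE G"
  then show "qsigma T W e = 0" unfolding qsigma_def using sigma_off_walk[OF W] by simp
next
  fix v assume "v \<in> gV G"
  have "(\<Sum>e\<in>gE G. incidence G T v e * qsigma T W e) = of_int (\<Sum>e\<in>gE G. incg G T v e * sigma T W e)"
    unfolding qsigma_def incidence_incg by (simp add: incg_of_int[where 'a = rat])
  also have "\<dots> = 0" using walk_balance[OF W T] by simp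
  finally show "(\<Sum>e\<in>gE G. incidence G T v e * qsigma T W e) = 0" .
qed

lemma space_sub: "module.subspace qscale (cycle_space G T)"
proof (rule module.subspaceI[OF mod_q])
  show "0 \<in> cycle_space G T" unfolding cycle_space_def by simp
next
  fix x y assume x: "x \<in> cycle_space G T" and y: "y \<in> cycle_space G T"
  then show "x + y \<in> cycle_space G T" unfolding cycle_space_def
    by (simp add: distrib_left sum.distrib)
next
  fix c x assume x: "x \<in> cycle_space G T"
  have "(\<Sum>e\<in>gE G. incidence G T v e * (c * x e)) = c * (\<Sum>e\<in>gE G. incidence G T v e * x e)" for v
    by (simp add: sum_distrib_left algebra_simps)
  then show "qscale c x \<in> cycle_space G T" using x unfolding cycle_space_def qscale_def by simp
qed

lemma sig_inj: assumes v: "v \<in> V" and w: "w \<in> V" and eq: "sigma T (Gm v) = sigma T (Gm w)"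
  shows "v = w"
proof (rule ccontr)
  assume vw: "v \<noteq> w"
  define c :: "'v \<Rightarrow> int" where "c u = (if u = v then 1 else if u = w then -1 else 0)" for u
  have "\<forall>e. (\<Sum>u\<in>V. c u * of_int (sigma T (Gm u) e)) = 0"
  proof
    fix e
    have "(\<Sum>u\<in>V. c u * of_int (sigma T (Gm u) e)) =
          (\<Sum>u\<in>V. (if u = v then sigma T (Gm v) e else 0) - (if u = w then sigma T (Gm w) e else 0))"
      by (rule sum.cong[OF refl]) (use vw in \<open>auto simp: c_def\<close>)
    also have "\<dots> = sigma T (Gm v) e - sigma T (Gm w) e"
      unfolding sum_subtractf using v w finV by simp
    finally show "(\<Sum>u\<in>V. c u * of_int (sigma T (Gm u) e)) = 0" using eq by simp
  qed
  then have "c v = 0" using R2 v by blast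
  then show False unfolding c_def by simp
qed

end

theorem mainTheorem16:
  fixes F :: "('v, 'h) graph" and Eb :: "'h set set" and C :: "'v set \<Rightarrow> 'h list"
  assumes "wf_graph F" and "four_regular F" and "based F Eb" and "euler_system F C"
  shows "integral_cycle_basis (delete_edges F Eb) (Gamma F Eb C)"
proof -
  interpret fr F Eb C using assms by unfold_locales
  have GV: "Gamma F Eb C = Gm ` V" unfolding Gamma_def ..
  have cwalks: "\<forall>W\<in>Gamma F Eb C. closed_walk G W" unfolding GV using Gm_cw by blast
  have main: "inj_on (sigma T) (Gamma F Eb C)
          \<and> module.independent qscale (qsigma T ` Gamma F Eb C)
          \<and> module.span qscale (qsigma T ` Gamma F Eb C) = cycle_space G T"
    if T: "orientation G T" for T
  proof (intro conjI)
    show "inj_on (sigma T) (Gamma F Eb C)"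
      unfolding GV by (rule inj_onI) (use sig_inj in blast)
    let ?qf = "\<lambda>w. qsigma T (Gm w)"
    have qinj: "inj_on ?qf V"
    proof (rule inj_onI)
      fix v w assume v: "v \<in> V" and w: "w \<in> V" and eq: "?qf v = ?qf w"
      have "sigma T (Gm v) = sigma T (Gm w)"
      proof
        fix e show "sigma T (Gm v) e = sigma T (Gm w) e" using fun_cong[OF eq, of e] unfolding qsigma_def by simp
      qed
      then show "v = w" using sig_inj v w by blast
    qed
    have img: "qsigma T ` Gamma F Eb C = ?qf ` V" unfolding GV by auto
    show "module.independent qscale (qsigma T ` Gamma F Eb C)"
    proof
      assume "module.dependent qscale (qsigma T ` Gamma F Eb C)"
      then obtain t u where t: "finite t" "t \<subseteq> ?qf ` V" "(\<Sum>v\<in>t. qscale (u v) v) = 0" and nz: "\<exists>v\<in>t. u v \<noteq> 0"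
        unfolding module.dependent_explicit[OF mod_q] img by blast
      define c where "c w = (if ?qf w \<in> t then u (?qf w) else 0)" for w
      define V' where "V' = {w \<in> V. ?qf w \<in> t}"
      have tV': "t = ?qf ` V'" unfolding V'_def using t(2) by auto
      have "(\<Sum>w\<in>V. qscale (c w) (?qf w)) = (\<Sum>w\<in>V'. qscale (u (?qf w)) (?qf w))"
      proof -
        have "(\<Sum>w\<in>V. qscale (c w) (?qf w)) = (\<Sum>w\<in>V. if w \<in> V' then qscale (u (?qf w)) (?qf w) else 0)"
          by (rule sum.cong[OF refl]) (auto simp: c_def V'_def qscale_def fun_eq_iff)
        also have "\<dots> = (\<Sum>w\<in>V \<inter> V'. qscale (u (?qf w)) (?qf w))"
          by (rule sum.inter_restrict[OF finV, symmetric])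
        also have "V \<inter> V' = V'" unfolding V'_def by auto
        finally show ?thesis .
      qed
      also have "\<dots> = (\<Sum>v\<in>t. qscale (u v) v)"
      proof -
        have sub: "V' \<subseteq> V" unfolding V'_def by auto
        show ?thesis unfolding tV' sum.reindex[OF inj_on_subset[OF qinj sub]] comp_def ..
      qed
      also have "\<dots> = 0" using t(3) .
      finally have z0: "(\<Sum>w\<in>V. qscale (c w) (?qf w)) = 0" .
      have "\<forall>e. (\<Sum>w\<in>V. c w * of_int (sigma T (Gm w) e)) = 0"
      proof
        fix e
        have "(\<Sum>w\<in>V. qscale (c w) (?qf w)) e = 0" using z0 by simp
        then show "(\<Sum>w\<in>V. c w * of_int (sigma T (Gm w) e)) = 0"
          unfolding sum_fun_app qscale_def qsigma_def by simp
      qed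
      then have c0: "\<forall>w\<in>V. c w = 0" using R2 by blast
      obtain v0 where v0: "v0 \<in> t" "u v0 \<noteq> 0" using nz by blast
      then obtain w0 where w0: "w0 \<in> V" "v0 = ?qf w0" using t(2) by blast
      have "c w0 = u v0" unfolding c_def using v0 w0 by simp
      then show False using c0 w0 v0 by simp
    qed
    show "module.span qscale (qsigma T ` Gamma F Eb C) = cycle_space G T"
    proof
      show "module.span qscale (qsigma T ` Gamma F Eb C) \<subseteq> cycle_space G T"
      proof (rule module.span_minimal[OF mod_q _ space_sub])
        show "qsigma T ` Gamma F Eb C \<subseteq> cycle_space G T"
          using walk_space[OF _ T] cwalks by blast
      qed
    next
      show "cycle_space G T \<subseteq> module.span qscale (qsigma T ` Gamma F Eb C)"
      proof
        fix x assume x: "x \<in> cycle_space G T"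
        have x0: "\<forall>e. e \<notin> gE G \<longrightarrow> x e = 0" using x unfolding cycle_space_def by simp
        have xv: "\<forall>v\<in>V. (\<Sum>e\<in>gE G. incg G T v e * x e) = 0"
          using x unfolding cycle_space_def incidence_incg G_simps by simp
        have "x = (\<Sum>w\<in>V. (\<lambda>e. cc T x w * of_int (sigma T (Gm w) e)))" by (rule R1[OF T x0 xv])
        also have "\<dots> = (\<Sum>w\<in>V. qscale (cc T x w) (?qf w))" unfolding qscale_def qsigma_def ..
        also have "\<dots> \<in> module.span qscale (qsigma T ` Gamma F Eb C)"
        proof (rule module.span_sum[OF mod_q])
          fix w assume "w \<in> V"
          then have "?qf w \<in> qsigma T ` Gamma F Eb C" unfolding img by blast
          then show "qscale (cc T x w) (?qf w) \<in> module.span qscale (qsigma T ` Gamma F Eb C)"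
            by (intro module.span_scale[OF mod_q] module.span_base[OF mod_q])
        qed
        finally show "x \<in> module.span qscale (qsigma T ` Gamma F Eb C)" .
      qed
    qed
  qed
  have integral: "sigma T W \<in> module.span zscale (sigma T ` Gamma F Eb C)"
    if T: "orientation G T" and W: "closed_walk G W" for T W
  proof -
    let ?x = "sigma T W"
    have x0: "\<forall>e. e \<notin> gE G \<longrightarrow> ?x e = 0" using sigma_off_walk[OF W] by blast
    have xv: "\<forall>v\<in>V. (\<Sum>e\<in>gE G. incg G T v e * ?x e) = 0" using walk_balance[OF W T] by blast
    have "?x = (\<Sum>w\<in>V. (\<lambda>e. cc T ?x w * of_int (sigma T (Gm w) e)))" by (rule R1[OF T x0 xv])
    also have "\<dots> = (\<Sum>w\<in>V. zscale (cc T ?x w) (sigma T (Gm w)))" unfolding zscale_def by simp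
    also have "\<dots> \<in> module.span zscale (sigma T ` Gamma F Eb C)"
    proof (rule module.span_sum[OF mod_z])
      fix w assume "w \<in> V"
      then have "sigma T (Gm w) \<in> sigma T ` Gamma F Eb C" unfolding GV by blast
      then show "zscale (cc T ?x w) (sigma T (Gm w)) \<in> module.span zscale (sigma T ` Gamma F Eb C)"
        by (intro module.span_scale[OF mod_z] module.span_base[OF mod_z])
    qed
    finally show ?thesis .
  qed
  show ?thesis unfolding integral_cycle_basis_def cycle_basis_def
    using cwalks main integral by blast
qed


end
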